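(* Let $s>0$ and let $f,g\colon\mathbb R^d\to[0,\infty)$ be proper log-concave functions with $f\le g$. Then the Löwner $s$-problem and the positive position Löwner $s$-problem for $f$ and $g$ have solutions (the minimum is attained).
   Context: Proper: upper semi-continuous with finite positive integral; log-concave: $\ln f$ concave. Positions $\mathcal P(g)=\{x\mapsto\alpha g(Ax+a):A$ non-singular, $\alpha>0,a\in\mathbb R^d\}$; positive positions $\mathcal P^+(g)$: same with $A$ positive definite. Löwner $s$-problem: minimize $\int_{\mathbb R^d}h^s$ over $h\in\mathcal P(g)$ subject to $f\le h$ pointwise; positive position version: over $h\in\mathcal P^+(g)$. *)

theory Defs
  imports "HOL-Analysis.Analysis"
begin

definition usc :: "(real^'n \<Rightarrow> real) \<Rightarrow> bool" where
  "usc f \<longleftrightarrow> (\<forall>t. open {x. f x < t})"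

definition lint :: "(real^'n \<Rightarrow> real) \<Rightarrow> ennreal" where
  "lint f = (\<integral>\<^sup>+ x. ennreal (f x) \<partial>lborel)"

definition proper_fun :: "(real^'n \<Rightarrow> real) \<Rightarrow> bool" where
  "proper_fun f \<longleftrightarrow> usc f \<and> 0 < lint f \<and> lint f < \<infinity>"

text \<open>Log-concave: ln f concave (with ln 0 = -\<infinity>), for nonnegative f.\<close>
definition log_concave :: "(real^'n \<Rightarrow> real) \<Rightarrow> bool" where
  "log_concave f \<longleftrightarrow> (\<forall>x y. \<forall>t\<in>{0<..<1::real}.
      f x powr (1 - t) * f y powr t \<le> f ((1 - t) *\<^sub>R x + t *\<^sub>R y))"

definition pos_def_mat :: "real^'n^'n \<Rightarrow> bool" where
  "pos_def_mat A \<longleftrightarrow> transpose A = A \<and> (\<forall>x. x \<noteq> 0 \<longrightarrow> 0 < x \<bullet> (A *v x))"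

definition positions :: "(real^'n \<Rightarrow> real) \<Rightarrow> (real^'n \<Rightarrow> real) set" where
  "positions g = {(\<lambda>x. \<alpha> * g (A *v x + a)) | A \<alpha> a. invertible A \<and> \<alpha> > 0}"

definition pos_positions :: "(real^'n \<Rightarrow> real) \<Rightarrow> (real^'n \<Rightarrow> real) set" where
  "pos_positions g = {(\<lambda>x. \<alpha> * g (A *v x + a)) | A \<alpha> a. pos_def_mat A \<and> \<alpha> > 0}"

definition solves_loewner :: "real \<Rightarrow> (real^'n \<Rightarrow> real) set \<Rightarrow> (real^'n \<Rightarrow> real) \<Rightarrow> (real^'n \<Rightarrow> real) \<Rightarrow> bool" where
  "solves_loewner s P f h \<longleftrightarrow> h \<in> P \<and> (\<forall>x. f x \<le> h x) \<and>
     (\<forall>h'\<in>P. (\<forall>x. f x \<le> h' x) \<longrightarrow> lint (\<lambda>x. h x powr s) \<le> lint (\<lambda>x. h' x powr s))"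

end

theory Submission
  imports Defs
begin


lemma shear_det_one:
  fixes m n :: "'n::finite"
  assumes "m \<noteq> n"
  shows "det (matrix (\<lambda>v::real^'n. \<chi> i. if i = m then v $ m + v $ n else v $ i)) = 1"
proof -
  have "matrix (\<lambda>v::real^'n. \<chi> i. if i = m then v $ m + v $ n else v $ i)
      = (\<chi> k. if k = m then row m (mat 1) + 1 *s row n (mat 1) else row k (mat 1))"
    by (auto simp: matrix_def vec_eq_iff row_def mat_def axis_def)
  then show ?thesis using det_row_operation[OF assms, of "mat 1 :: real^'n^'n" 1] by simp
qed

proposition
 fixes f :: "real^'n::finite \<Rightarrow> real^'n::_"
  assumes "linear f" "S \<in> lmeasurable"
  shows gmeasurable_linear_image: "(f ` S) \<in> lmeasurable"
    and gmeasure_linear_image: "measure lebesgue (f ` S) = \<bar>det (matrix f)\<bar> * measure lebesgue S" (is "?Q f S")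
proof -
  have "\<forall>S \<in> lmeasurable. (f ` S) \<in> lmeasurable \<and> ?Q f S"
  proof (rule induct_linear_elementary [OF \<open>linear f\<close>]; intro ballI)
    fix f g and S :: "(real,'n) vec set"
    assume "linear f" and "linear g"
      and f [rule_format]: "\<forall>S \<in> lmeasurable. f ` S \<in> lmeasurable \<and> ?Q f S"
      and g [rule_format]: "\<forall>S \<in> lmeasurable. g ` S \<in> lmeasurable \<and> ?Q g S"
      and S: "S \<in> lmeasurable"
    then have gS: "g ` S \<in> lmeasurable"
      by blast
    show "(f \<circ> g) ` S \<in> lmeasurable \<and> ?Q (f \<circ> g) S"
      using f [OF gS] g [OF S] matrix_compose [OF \<open>linear g\<close> \<open>linear f\<close>]
      by (simp add: o_def image_comp abs_mult det_mul)
  next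
    fix f :: "real^'n::_ \<Rightarrow> real^'n::_" and i and S :: "(real^'n::_) set"
    assume "linear f" and 0: "\<And>x. f x $ i = 0" and "S \<in> lmeasurable"
    then have "\<not> inj f"
      by (metis (full_types) linear_injective_imp_surjective one_neq_zero surjE vec_component)
    have detf: "det (matrix f) = 0"
      using \<open>\<not> inj f\<close> det_nz_iff_inj[OF \<open>linear f\<close>] by blast
    show "f ` S \<in> lmeasurable \<and> ?Q f S"
    proof
      show "f ` S \<in> lmeasurable"
        using lmeasurable_iff_indicator_has_integral \<open>linear f\<close> \<open>\<not> inj f\<close> negligible_UNIV negligible_linear_singular_image by blast
      have "measure lebesgue (f ` S) = 0"
        by (meson \<open>\<not> inj f\<close> \<open>linear f\<close> negligible_imp_measure0 negligible_linear_singular_image)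
      also have "\<dots> = \<bar>det (matrix f)\<bar> * measure lebesgue S"
        by (simp add: detf)
      finally show "?Q f S" .
    qed
  next
    fix c and S :: "(real^'n::_) set"
    assume "S \<in> lmeasurable"
    show "(\<lambda>a. \<chi> i. c i * a $ i) ` S \<in> lmeasurable \<and> ?Q (\<lambda>a. \<chi> i. c i * a $ i) S"
    proof
      show "(\<lambda>a. \<chi> i. c i * a $ i) ` S \<in> lmeasurable"
        by (simp add: \<open>S \<in> lmeasurable\<close> measurable_stretch)
      show "?Q (\<lambda>a. \<chi> i. c i * a $ i) S"
        by (simp add: measure_stretch [OF \<open>S \<in> lmeasurable\<close>, of c] axis_def matrix_def det_diagonal)
    qed
  next
    fix m :: "'n" and n :: "'n" and S :: "(real, 'n) vec set"
    assume "m \<noteq> n" and "S \<in> lmeasurable"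
    let ?h = "\<lambda>v::(real, 'n) vec. \<chi> i. v $ Transposition.transpose m n i"
    have lin: "linear ?h"
      by (rule linearI) (simp_all add: plus_vec_def scaleR_vec_def)
    have meq: "measure lebesgue ((\<lambda>v::(real, 'n) vec. \<chi> i. v $ Transposition.transpose m n i) ` cbox a b)
             = measure lebesgue (cbox a b)" for a b
    proof (cases "cbox a b = {}")
      case True then show ?thesis
        by simp
    next
      case False
      then have him: "?h ` (cbox a b) \<noteq> {}"
        by blast
      have eq: "?h ` (cbox a b) = cbox (?h a) (?h b)"
        by (auto simp: image_iff lambda_swap_Galois mem_box_cart) (metis transpose_involutory)+
      show ?thesis
        using him prod.permute [OF permutes_swap_id, where S=UNIV and g="\<lambda>i. (b - a)$i", symmetric]
        by (simp add: eq content_cbox_cart False)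
    qed
    have "(\<chi> i j. if Transposition.transpose m n i = j then 1 else 0) = (\<chi> i j. if j = Transposition.transpose m n i then 1 else (0::real))"
      by (auto intro!: Cart_lambda_cong)
    then have "matrix ?h = transpose(\<chi> i j. mat 1 $ i $ Transposition.transpose m n j)"
      by (auto simp: matrix_eq transpose_def axis_def mat_def matrix_def)
    then have 1: "\<bar>det (matrix ?h)\<bar> = 1"
      by (simp add: det_permute_columns permutes_swap_id sign_swap_id abs_mult)
    show "?h ` S \<in> lmeasurable \<and> ?Q ?h S"
      using measure_linear_sufficient [OF lin \<open>S \<in> lmeasurable\<close>] meq 1 by force
  next
    fix m n :: "'n" and S :: "(real, 'n) vec set"
    assume "m \<noteq> n" and "S \<in> lmeasurable"
    let ?h = "\<lambda>v::(real, 'n) vec. \<chi> i. if i = m then v $ m + v $ n else v $ i"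
    have lin: "linear ?h"
      by (rule linearI) (auto simp: algebra_simps plus_vec_def scaleR_vec_def vec_eq_iff)
    have 1: "det(matrix ?h) = 1" using shear_det_one[OF \<open>m \<noteq> n\<close>] by simp
    have meq: "measure lebesgue (?h ` (cbox a b)) = measure lebesgue (cbox a b)" for a b
    proof (cases "cbox a b = {}")
      case True then show ?thesis by simp
    next
      case False
      then have ne: "(+) (\<chi> i. if i = n then - a $ n else 0) ` cbox a b \<noteq> {}"
        by auto
      let ?v = "\<chi> i. if i = n then - a $ n else 0"
      have "?h ` cbox a b
            = (+) (\<chi> i. if i = m \<or> i = n then a $ n else 0) ` ?h ` (+) ?v ` (cbox a b)"
        using \<open>m \<noteq> n\<close> unfolding image_comp o_def by (force simp: vec_eq_iff)
      then have "measure lebesgue (?h ` (cbox a b))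
               = measure lebesgue ((\<lambda>v. \<chi> i. if i = m then v $ m + v $ n else v $ i) `
                                   (+) ?v ` cbox a b)"
        by (rule ssubst) (rule measure_translation)
      also have "\<dots> = measure lebesgue ((\<lambda>v. \<chi> i. if i = m then v $ m + v $ n else v $ i) ` cbox (?v +a) (?v + b))"
        by (metis (no_types, lifting) cbox_translation)
      also have "\<dots> = measure lebesgue ((+) ?v ` cbox a b)"
        apply (subst measure_shear_interval)
        using \<open>m \<noteq> n\<close> ne apply auto
        apply (simp add: cbox_translation)
        by (metis cbox_borel cbox_translation measure_completion sets_lborel)
      also have "\<dots> = measure lebesgue (cbox a b)"
        by (rule measure_translation)
        finally show ?thesis .
      qed
    show "?h ` S \<in> lmeasurable \<and> ?Q ?h S"
      using measure_linear_sufficient [OF lin \<open>S \<in> lmeasurable\<close>] meq 1 by force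
  qed
  with assms show "(f ` S) \<in> lmeasurable" "?Q f S"
    by metis+
qed




lemma affine_preimage_eq:
  fixes A B :: "real^'n^'n"
  assumes "A ** B = mat 1" "B ** A = mat 1"
  shows "{x. A *v x + a \<in> E} = (\<lambda>y. B *v (y - a)) ` E"
proof
  show "{x. A *v x + a \<in> E} \<subseteq> (\<lambda>y. B *v (y - a)) ` E"
  proof
    fix x assume "x \<in> {x. A *v x + a \<in> E}"
    moreover have "x = B *v ((A *v x + a) - a)"
      by (simp add: matrix_vector_mul_assoc assms)
    ultimately show "x \<in> (\<lambda>y. B *v (y - a)) ` E" by blast
  qed
  show "(\<lambda>y. B *v (y - a)) ` E \<subseteq> {x. A *v x + a \<in> E}"
    by (auto simp: matrix_vector_mul_assoc assms)
qed

lemma box_minus_translation: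
  fixes a l u :: "'a::euclidean_space"
  shows "(\<lambda>y. y - a) ` box l u = box (l - a) (u - a)"
proof (rule set_eqI, rule iffI)
  fix x assume "x \<in> (\<lambda>y. y - a) ` box l u"
  then show "x \<in> box (l - a) (u - a)" by (auto simp: mem_box inner_diff_left)
next
  fix x assume "x \<in> box (l - a) (u - a)"
  then have "x + a \<in> box l u" by (auto simp: mem_box inner_diff_left inner_add_left)
  then show "x \<in> (\<lambda>y. y - a) ` box l u" by (rule rev_image_eqI) simp
qed

lemma lborel_affine_matrix:
  fixes A :: "real^'n^'n" and a :: "real^'n"
  assumes "invertible A"
  shows "lborel = density (distr lborel borel (\<lambda>x. A *v x + a)) (\<lambda>_. ennreal \<bar>det A\<bar>)"
proof (rule lborel_eqI)
  obtain B where AB: "A ** B = mat 1" "B ** A = mat 1"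
    using assms invertible_def by blast
  have dAB: "det A * det B = 1"
    using det_mul[of A B] AB by simp
  have [measurable]: "(\<lambda>x. A *v x + a) \<in> borel \<rightarrow>\<^sub>M borel"
    by (intro borel_measurable_continuous_onI continuous_intros)
  fix l u :: "real^'n" assume le: "\<And>b. b \<in> Basis \<Longrightarrow> l \<bullet> b \<le> u \<bullet> b"
  let ?T = "\<lambda>x. A *v x + a"
  have pre: "?T -` box l u = (\<lambda>y. B *v y) ` box (l - a) (u - a)"
  proof -
    have "?T -` box l u = {x. A *v x + a \<in> box l u}" by auto
    also have "\<dots> = (\<lambda>y. B *v (y - a)) ` box l u"
      by (rule affine_preimage_eq[OF AB])
    also have "\<dots> = (\<lambda>y. B *v y) ` ((\<lambda>y. y - a) ` box l u)"
      by (simp add: image_image)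
    also have "(\<lambda>y. y - a) ` box l u = box (l - a) (u - a)"
      by (rule box_minus_translation)
    finally show ?thesis .
  qed
  have lin: "linear ((*v) B)" by (rule matrix_vector_mul_linear)
  have bm: "box (l - a) (u - a) \<in> lmeasurable" by simp
  have m1: "measure lebesgue ((\<lambda>y. B *v y) ` box (l - a) (u - a)) = \<bar>det B\<bar> * measure lebesgue (box (l - a) (u - a))"
    using gmeasure_linear_image[OF lin bm] by (simp only: matrix_of_matrix_vector_mul)
  have im_l: "(\<lambda>y. B *v y) ` box (l - a) (u - a) \<in> lmeasurable"
    by (rule gmeasurable_linear_image[OF lin bm])
  have "emeasure lborel (?T -` box l u) = emeasure lebesgue (?T -` box l u)"
  proof -
    have "?T -` box l u \<in> sets lborel"
      using measurable_sets[OF \<open>?T \<in> borel \<rightarrow>\<^sub>M borel\<close>, of "box l u"] by simp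
    then show ?thesis by (simp add: emeasure_completion)
  qed
  also have "\<dots> = ennreal (\<bar>det B\<bar> * measure lebesgue (box (l - a) (u - a)))"
    unfolding pre using im_l m1 by (simp only: emeasure_eq_measure2)
  finally have e1: "emeasure lborel (?T -` box l u) = ennreal (\<bar>det B\<bar> * measure lebesgue (box (l - a) (u - a)))" .
  have e2: "measure lebesgue (box (l - a) (u - a)) = (\<Prod>b\<in>Basis. (u - l) \<bullet> b)"
  proof -
    have eq: "(\<lambda>y. y - a) = (+) (- a)" by (rule ext) simp
    have "box (l - a) (u - a) = (+) (- a) ` box l u"
      by (metis box_minus_translation eq)
    then have "measure lebesgue (box (l - a) (u - a)) = measure lebesgue (box l u)"
      by (simp only: measure_translation)
    also have "\<dots> = measure lborel (box l u)"
      by (rule measure_completion) simp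
    also have "\<dots> = (\<Prod>b\<in>Basis. (u - l) \<bullet> b)"
      by (rule measure_lborel_box[OF le])
    finally show ?thesis .
  qed
  have "emeasure (density (distr lborel borel ?T) (\<lambda>_. ennreal \<bar>det A\<bar>)) (box l u)
      = ennreal \<bar>det A\<bar> * emeasure lborel (?T -` box l u)"
    by (simp add: emeasure_density emeasure_distr nn_integral_cmult_indicator)
  also have "\<dots> = ennreal \<bar>det A\<bar> * ennreal (\<bar>det B\<bar> * (\<Prod>b\<in>Basis. (u - l) \<bullet> b))"
    by (simp only: e1 e2)
  also have "\<dots> = ennreal (\<bar>det A\<bar> * (\<bar>det B\<bar> * (\<Prod>b\<in>Basis. (u - l) \<bullet> b)))"
    by (rule ennreal_mult'[symmetric]) simp
  also have "\<bar>det A\<bar> * (\<bar>det B\<bar> * (\<Prod>b\<in>Basis. (u - l) \<bullet> b)) = (\<Prod>b\<in>Basis. (u - l) \<bullet> b)"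
  proof -
    have "\<bar>det A\<bar> * \<bar>det B\<bar> = 1" using dAB by (simp add: abs_mult[symmetric])
    then show ?thesis by (simp add: mult.assoc[symmetric])
  qed
  finally show "emeasure (density (distr lborel borel ?T) (\<lambda>_. ennreal \<bar>det A\<bar>)) (box l u) = ennreal (\<Prod>b\<in>Basis. (u - l) \<bullet> b)" .
qed simp

lemma nn_integral_affine_matrix:
  fixes A :: "real^'n^'n" and a :: "real^'n" and G :: "real^'n \<Rightarrow> ennreal"
  assumes "invertible A" and G: "G \<in> borel_measurable borel"
  shows "(\<integral>\<^sup>+x. G x \<partial>lborel) = ennreal \<bar>det A\<bar> * (\<integral>\<^sup>+x. G (A *v x + a) \<partial>lborel)"
proof -
  let ?T = "\<lambda>x. A *v x + a"
  have T: "?T \<in> borel \<rightarrow>\<^sub>M borel"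
    by (intro borel_measurable_continuous_onI continuous_intros)
  have T': "?T \<in> lborel \<rightarrow>\<^sub>M borel" using T by simp
  have "(\<integral>\<^sup>+x. G x \<partial>lborel) = (\<integral>\<^sup>+x. G x \<partial>density (distr lborel borel ?T) (\<lambda>_. ennreal \<bar>det A\<bar>))"
    using lborel_affine_matrix[OF assms(1), of a] by (rule arg_cong)
  also have "\<dots> = (\<integral>\<^sup>+x. ennreal \<bar>det A\<bar> * G x \<partial>distr lborel borel ?T)"
    by (rule nn_integral_density) (use G in simp_all)
  also have "\<dots> = (\<integral>\<^sup>+x. ennreal \<bar>det A\<bar> * G (?T x) \<partial>lborel)"
    by (rule nn_integral_distr[OF T']) (use G in simp)
  also have "\<dots> = ennreal \<bar>det A\<bar> * (\<integral>\<^sup>+x. G (?T x) \<partial>lborel)"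
    by (rule nn_integral_cmult) (use measurable_comp[OF T G] in \<open>simp add: comp_def\<close>)
  finally show ?thesis .
qed

lemma emeasure_affine_matrix:
  fixes A :: "real^'n^'n" and a :: "real^'n"
  assumes "invertible A" and E: "E \<in> sets borel"
  shows "emeasure lborel E = ennreal \<bar>det A\<bar> * emeasure lborel {x. A *v x + a \<in> E}"
proof -
  let ?T = "\<lambda>x. A *v x + a"
  have T: "?T \<in> borel \<rightarrow>\<^sub>M borel"
    by (intro borel_measurable_continuous_onI continuous_intros)
  have pre: "{x. A *v x + a \<in> E} \<in> sets lborel"
    using measurable_sets[OF T E] by (simp add: vimage_def)
  have ind: "indicator E \<in> borel_measurable borel"
    using E by (rule borel_measurable_indicator)
  have "emeasure lborel E = (\<integral>\<^sup>+x. indicator E x \<partial>lborel)"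
    using E by (simp only: nn_integral_indicator sets_lborel)
  also have "\<dots> = ennreal \<bar>det A\<bar> * (\<integral>\<^sup>+x. indicator E (A *v x + a) \<partial>lborel)"
    by (rule nn_integral_affine_matrix[OF assms(1) ind])
  also have "(\<lambda>x. indicator E (A *v x + a)) = (indicator {x. A *v x + a \<in> E} :: _ \<Rightarrow> ennreal)"
    by (rule ext) (simp add: indicator_def)
  also have "(\<integral>\<^sup>+x. indicator {x. A *v x + a \<in> E} x \<partial>lborel) = emeasure lborel {x. A *v x + a \<in> E}"
    using pre by (rule nn_integral_indicator)
  finally show ?thesis .
qed




lemma usc_borel:
  fixes f :: "real^'n \<Rightarrow> real"
  assumes "usc f"
  shows "f \<in> borel_measurable borel"
proof -
  have "\<forall>a. {w \<in> space borel. f w < a} \<in> sets borel"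
    using assms unfolding usc_def by auto
  then show ?thesis by (simp add: borel_measurable_iff_less)
qed

lemma usc_closed_level:
  fixes f :: "real^'n \<Rightarrow> real"
  assumes "usc f"
  shows "closed {x. t \<le> f x}"
proof -
  have "- {x. t \<le> f x} = {x. f x < t}" by auto
  then show ?thesis using assms unfolding usc_def closed_def by metis
qed

lemma usc_level_borel:
  fixes f :: "real^'n \<Rightarrow> real"
  assumes "usc f"
  shows "{x. t \<le> f x} \<in> sets borel"
  using usc_closed_level[OF assms] by (rule borel_closed)

lemma lc_ineq:
  fixes f :: "real^'n \<Rightarrow> real"
  assumes lc: "log_concave f" and p: "0 \<le> p" "p \<le> f x" and q: "0 \<le> q" "q \<le> f y"
    and u: "0 < u" "u < 1"
  shows "p powr (1 - u) * q powr u \<le> f ((1 - u) *\<^sub>R x + u *\<^sub>R y)"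
proof -
  have "p powr (1 - u) * q powr u \<le> f x powr (1 - u) * f y powr u"
    by (intro mult_mono powr_mono2) (use p q u in auto)
  also have "\<dots> \<le> f ((1 - u) *\<^sub>R x + u *\<^sub>R y)"
    using lc u unfolding log_concave_def by auto
  finally show ?thesis .
qed

lemma lc_level_convex:
  fixes f :: "real^'n \<Rightarrow> real"
  assumes lc: "log_concave f" and t: "0 < t"
  shows "convex {x. t \<le> f x}"
  unfolding convex_alt
proof (intro ballI allI impI)
  fix x y and u :: real assume x: "x \<in> {x. t \<le> f x}" and y: "y \<in> {x. t \<le> f x}" and u: "0 \<le> u \<and> u \<le> 1"
  show "(1 - u) *\<^sub>R x + u *\<^sub>R y \<in> {x. t \<le> f x}"
  proof (cases "u = 0 \<or> u = 1")
    case True then show ?thesis using x y by auto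
  next
    case False
    then have u': "0 < u" "u < 1" using u by auto
    have "t powr (1 - u) * t powr u \<le> f ((1 - u) *\<^sub>R x + u *\<^sub>R y)"
      by (rule lc_ineq[OF lc]) (use x y t u' in auto)
    moreover have "t powr (1 - u) * t powr u = t"
      using t by (simp add: powr_add[symmetric])
    ultimately show ?thesis by simp
  qed
qed

lemma lint_ge_level:
  fixes f :: "real^'n \<Rightarrow> real"
  assumes S: "S \<in> sets borel" and sub: "S \<subseteq> {x. t \<le> f x}"
  shows "ennreal t * emeasure lborel S \<le> lint f"
proof -
  have "ennreal t * emeasure lborel S = (\<integral>\<^sup>+x. ennreal t * indicator S x \<partial>lborel)"
    using S by (simp add: nn_integral_cmult_indicator)
  also have "\<dots> \<le> (\<integral>\<^sup>+x. ennreal (f x) \<partial>lborel)"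
  proof (rule nn_integral_mono)
    fix x show "ennreal t * indicator S x \<le> ennreal (f x)"
      using sub by (cases "x \<in> S") (auto intro: ennreal_leI)
  qed
  finally show ?thesis unfolding lint_def .
qed

lemma exists_level_ball:
  fixes f :: "real^'n \<Rightarrow> real"
  assumes usc: "usc f" and lc: "log_concave f" and pos: "0 < lint f"
  shows "\<exists>x0 r t. 0 < r \<and> 0 < t \<and> ball x0 r \<subseteq> {x. t \<le> f x}"
proof -
  have "\<exists>t>0. {x. t \<le> f x} \<notin> null_sets lborel"
  proof (rule ccontr)
    assume "\<not> ?thesis"
    then have N: "\<And>t. 0 < t \<Longrightarrow> {x. t \<le> f x} \<in> null_sets lborel" by blast
    have "\<And>n::nat. AE x in lborel. x \<notin> {x. inverse (real (Suc n)) \<le> f x}"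
      by (rule AE_not_in) (rule N, simp)
    then have "AE x in lborel. \<forall>n::nat. x \<notin> {x. inverse (real (Suc n)) \<le> f x}"
      by (simp add: AE_all_countable)
    then have AE0: "AE x in lborel. ennreal (f x) = 0"
    proof (rule AE_mp, intro AE_I2 impI)
      fix x assume H: "\<forall>n::nat. x \<notin> {x. inverse (real (Suc n)) \<le> f x}"
      have "f x \<le> 0"
      proof (rule ccontr)
        assume "\<not> f x \<le> 0"
        then obtain n where "inverse (real (Suc n)) < f x"
          using reals_Archimedean[of "f x"] by auto
        then show False using H by (meson less_imp_le mem_Collect_eq)
      qed
      then show "ennreal (f x) = 0" by (simp add: ennreal_eq_0_iff)
    qed
    have "lint f = (\<integral>\<^sup>+x. 0 \<partial>lborel)"
      using nn_integral_cong_AE[OF AE0] unfolding lint_def by simp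
    then show False using pos by simp
  qed
  then obtain t where t: "0 < t" and nn: "{x. t \<le> f x} \<notin> null_sets lborel" by blast
  have B: "{x. t \<le> f x} \<in> sets borel" by (rule usc_level_borel[OF usc])
  have "\<not> negligible {x. t \<le> f x}"
  proof
    assume "negligible {x. t \<le> f x}"
    then have "{x. t \<le> f x} \<in> null_sets lebesgue"
      using B by (simp add: negligible_iff_null_sets)
    then have "{x. t \<le> f x} \<in> null_sets lborel"
      using B null_sets_completion_iff[of "{x. t \<le> f x}" lborel] by simp
    then show False using nn by simp
  qed
  then have "interior {x. t \<le> f x} \<noteq> {}"
    using negligible_convex_interior[OF lc_level_convex[OF lc t]] by simp
  then obtain x0 where "x0 \<in> interior {x. t \<le> f x}" by blast
  then obtain r where "0 < r" "ball x0 r \<subseteq> {x. t \<le> f x}" by (auto simp: mem_interior)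
  then show ?thesis using t by blast
qed




lemma g_bounded:
  fixes g :: "real^'n \<Rightarrow> real"
  assumes usc: "usc g" and lc: "log_concave g" and g0: "\<And>x. 0 \<le> g x"
    and pos: "0 < lint g" and fin: "lint g < \<infinity>"
  shows "\<exists>M>0. \<forall>y. g y \<le> M"
proof -
  obtain w \<rho> c where \<rho>: "0 < \<rho>" and c: "0 < c" and B: "ball w \<rho> \<subseteq> {x. c \<le> g x}"
    using exists_level_ball[OF usc lc pos] by blast
  define vol where "vol = unit_ball_vol (real DIM(real^'n)) * (\<rho>/2) ^ DIM(real^'n)"
  have vol: "0 < vol" unfolding vol_def using \<rho> by simp
  have em: "emeasure lborel (ball z (\<rho>/2)) = ennreal vol" for z :: "real^'n"
    unfolding vol_def using \<rho> by (simp add: emeasure_ball)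
  define Lg where "Lg = enn2real (lint g)"
  have Lg: "lint g = ennreal Lg" unfolding Lg_def using fin by simp
  have Lg0: "0 \<le> Lg" unfolding Lg_def by simp
  define K where "K = Lg / (vol * c powr (1/2))"
  have bound: "g y \<le> K^2" for y
  proof -
    define z0 where "z0 = (1/2) *\<^sub>R w + (1/2) *\<^sub>R y"
    have sub: "ball z0 (\<rho>/2) \<subseteq> {x. c powr (1/2) * g y powr (1/2) \<le> g x}"
    proof
      fix z assume z: "z \<in> ball z0 (\<rho>/2)"
      define w' where "w' = 2 *\<^sub>R z - y"
      have "w - w' = 2 *\<^sub>R (z0 - z)"
        unfolding w'_def z0_def by (simp add: algebra_simps scaleR_add_right)
      then have "dist w w' = 2 * dist z0 z"
        by (simp add: dist_norm)
      then have "w' \<in> ball w \<rho>" using z by simp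
      then have cw: "c \<le> g w'" using B by auto
      have zeq: "z = (1 - 1/2) *\<^sub>R w' + (1/2) *\<^sub>R y"
        unfolding w'_def by (simp add: algebra_simps)
      have "c powr (1 - 1/2) * g y powr (1/2) \<le> g ((1 - 1/2) *\<^sub>R w' + (1/2) *\<^sub>R y)"
        by (rule lc_ineq[OF lc]) (use c cw g0 in auto)
      then show "z \<in> {x. c powr (1/2) * g y powr (1/2) \<le> g x}"
        using zeq by simp
    qed
    have "ennreal (c powr (1/2) * g y powr (1/2)) * emeasure lborel (ball z0 (\<rho>/2)) \<le> lint g"
      by (rule lint_ge_level[OF _ sub]) simp
    then have "ennreal (c powr (1/2) * g y powr (1/2) * vol) \<le> ennreal Lg"
      unfolding em Lg using vol by (simp add: ennreal_mult')
    then have "c powr (1/2) * g y powr (1/2) * vol \<le> Lg"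
      using Lg0 by simp
    then have h: "g y powr (1/2) \<le> K"
      unfolding K_def using vol c by (simp add: pos_le_divide_eq mult_ac)
    have "g y = (g y powr (1/2))^2"
    proof -
      have "(g y powr (1/2))^2 = g y powr (1/2) * g y powr (1/2)" by (simp add: power2_eq_square)
      also have "\<dots> = g y powr 1" by (simp add: powr_add[symmetric])
      also have "\<dots> = g y" using g0[of y] by simp
      finally show ?thesis by simp
    qed
    also have "\<dots> \<le> K^2"
      by (rule power_mono[OF h]) simp
    finally show ?thesis .
  qed
  show ?thesis
    by (rule exI[of _ "K^2 + 1"]) (use bound in \<open>auto intro: add_nonneg_pos order_trans[OF _ less_imp_le[OF less_add_one]]\<close>)
qed

lemma mat_vec_scalar:
  "(mat c :: real^'n^'n) *v x = c *\<^sub>R x"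
proof -
  have "(\<Sum>j\<in>UNIV. (if i = j then c else 0) * x $ j) = c * x $ i" for i
  proof -
    have "(\<Sum>j\<in>UNIV. (if i = j then c else 0) * x $ j) = (\<Sum>j\<in>UNIV. if i = j then c * x $ j else 0)"
      by (rule sum.cong) auto
    then show ?thesis by simp
  qed
  then show ?thesis by (simp add: vec_eq_iff matrix_vector_mult_def mat_def)
qed

lemma det_mat_scalar:
  "det (mat c :: real^'n^'n) = c ^ CARD('n)"
  by (simp add: det_diagonal mat_def)

lemma level_measure_bound:
  fixes g :: "real^'n \<Rightarrow> real"
  assumes usc: "usc g" and lc: "log_concave g" and g0: "\<And>x. 0 \<le> g x"
    and G0: "0 < g y0" and lam: "1 \<le> k" and u: "0 < u" and ln: "ln (g y0 / u) \<le> k"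
  shows "emeasure lborel {x. u \<le> g x} \<le> ennreal (k ^ CARD('n)) * emeasure lborel {x. g y0 * exp (-1) \<le> g x}"
proof -
  define A where "A = (mat k :: real^'n^'n)"
  define a where "a = (1 - k) *\<^sub>R y0"
  have Av: "A *v x + a = k *\<^sub>R x + (1 - k) *\<^sub>R y0" for x
    unfolding A_def a_def by (simp add: mat_vec_scalar)
  have detA: "det A = k ^ CARD('n)" unfolding A_def by (rule det_mat_scalar)
  have inv: "invertible A" using lam by (simp add: invertible_det_nz detA)
  have Gu: "g y0 / u \<le> exp k"
  proof -
    have "g y0 / u = exp (ln (g y0 / u))" using G0 u by simp
    also have "\<dots> \<le> exp k" using ln by simp
    finally show ?thesis .
  qed
  have sub: "{x. A *v x + a \<in> {x. u \<le> g x}} \<subseteq> {x. g y0 * exp (-1) \<le> g x}"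
  proof
    fix x assume "x \<in> {x. A *v x + a \<in> {x. u \<le> g x}}"
    then have hy: "u \<le> g (k *\<^sub>R x + (1 - k) *\<^sub>R y0)" by (simp add: Av)
    show "x \<in> {x. g y0 * exp (-1) \<le> g x}"
    proof (cases "k = 1")
      case True
      have "g y0 \<le> exp 1 * u" using Gu True u by (simp add: divide_le_eq mult.commute)
      then have "g y0 * exp (-1) \<le> u" by (simp add: exp_minus field_simps)
      then show ?thesis using hy True by simp
    next
      case False
      define v where "v = 1 / k"
      have v: "0 < v" "v < 1" using lam False unfolding v_def by auto
      have xeq: "x = (1 - v) *\<^sub>R y0 + v *\<^sub>R (k *\<^sub>R x + (1 - k) *\<^sub>R y0)"
        using lam unfolding v_def by (simp add: algebra_simps)
      have "g y0 powr (1 - v) * u powr v \<le> g ((1 - v) *\<^sub>R y0 + v *\<^sub>R (k *\<^sub>R x + (1 - k) *\<^sub>R y0))"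
        by (rule lc_ineq[OF lc]) (use G0 u hy v in auto)
      then have L: "g y0 powr (1 - v) * u powr v \<le> g x" using xeq by simp
      have e1: "g y0 powr (1 - v) * u powr v = exp ((1 - v) * ln (g y0) + v * ln u)"
        using G0 u by (simp add: powr_def exp_add)
      have e2: "g y0 * exp (-1) = exp (ln (g y0) - 1)"
        using G0 by (simp add: exp_diff exp_minus field_simps)
      have "v * (ln (g y0) - ln u) \<le> v * k"
        using ln G0 u v by (intro mult_left_mono) (auto simp: ln_div)
      also have "v * k = 1" using lam unfolding v_def by simp
      finally have "ln (g y0) - 1 \<le> (1 - v) * ln (g y0) + v * ln u"
        by (simp add: algebra_simps)
      then have "g y0 * exp (-1) \<le> g y0 powr (1 - v) * u powr v"
        unfolding e1 e2 by simp
      then show ?thesis using L by simp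
    qed
  qed
  have "emeasure lborel {x. u \<le> g x} = ennreal \<bar>det A\<bar> * emeasure lborel {x. A *v x + a \<in> {x. u \<le> g x}}"
    by (rule emeasure_affine_matrix[OF inv usc_level_borel[OF usc]])
  also have "\<dots> \<le> ennreal \<bar>det A\<bar> * emeasure lborel {x. g y0 * exp (-1) \<le> g x}"
    by (intro mult_left_mono emeasure_mono sub) (simp_all add: usc_level_borel[OF usc])
  also have "\<bar>det A\<bar> = k ^ CARD('n)" using lam by (simp add: detA)
  finally show ?thesis .
qed




lemma convex_bounded_by_measure:
  fixes K :: "(real^'n) set"
  assumes cK: "convex K" and B: "ball c r \<subseteq> K" and r: "0 < r"
    and mK: "emeasure lborel K \<le> ennreal m" and m: "0 \<le> m" and p: "p \<in> K" and Kb: "K \<in> sets borel"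
  shows "norm (p - c) \<le> 2 * r * (m / (unit_ball_vol (real DIM(real^'n)) * (r/2) ^ DIM(real^'n)))"
proof -
  define vol where "vol = unit_ball_vol (real DIM(real^'n)) * (r/2) ^ DIM(real^'n)"
  have vol: "0 < vol" unfolding vol_def using r by simp
  have em: "emeasure lborel (ball z (r/2)) = ennreal vol" for z :: "real^'n"
    unfolding vol_def using r by (simp add: emeasure_ball)
  define D where "D = norm (p - c)"
  show ?thesis
  proof (cases "D = 0")
    case True
    then show ?thesis unfolding D_def[symmetric] vol_def[symmetric] using r m vol by simp
  next
    case False
    then have D: "0 < D" unfolding D_def by simp
    define N where "N = nat \<lfloor>D / (2*r)\<rfloor>"
    have N1: "real N \<le> D / (2*r)"
      unfolding N_def using D r by (simp add: of_nat_nat)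
    have N2: "D / (2*r) < real N + 1"
      unfolding N_def using D r by (simp add: of_nat_nat)
    define ctr where "ctr k = c + (real k * r / D) *\<^sub>R (p - c)" for k :: nat
    have tau: "real k * r / D \<le> 1/2" if "k \<le> N" for k
    proof -
      have "real k \<le> D / (2*r)" using that N1 by linarith
      then have "real k * r \<le> D / 2" using r by (simp add: field_simps)
      then show ?thesis using D by (simp add: field_simps)
    qed
    have inK: "ball (ctr k) (r/2) \<subseteq> K" if k: "k \<le> N" for k
    proof
      fix z assume z: "z \<in> ball (ctr k) (r/2)"
      define \<tau> where "\<tau> = real k * r / D"
      have t0: "0 \<le> \<tau>" unfolding \<tau>_def using r D by simp
      have t1: "\<tau> \<le> 1/2" unfolding \<tau>_def by (rule tau[OF k])
      define w where "w = (1 / (1 - \<tau>)) *\<^sub>R (z - \<tau> *\<^sub>R p)"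
      have wz: "(1 - \<tau>) *\<^sub>R w = z - \<tau> *\<^sub>R p"
        unfolding w_def using t1 by simp
      have zeq: "z = (1 - \<tau>) *\<^sub>R w + \<tau> *\<^sub>R p"
        by (simp add: wz)
      have ctr_eq: "ctr k = c + \<tau> *\<^sub>R (p - c)" unfolding ctr_def \<tau>_def by simp
      have "w - c = (1 / (1 - \<tau>)) *\<^sub>R (z - ctr k)"
      proof -
        have h: "(1 - \<tau>) *\<^sub>R (w - c) = z - ctr k"
          using zeq ctr_eq by (simp add: algebra_simps)
        have "w - c = (1 / (1 - \<tau>)) *\<^sub>R ((1 - \<tau>) *\<^sub>R (w - c))" using t1 by simp
        also have "\<dots> = (1 / (1 - \<tau>)) *\<^sub>R (z - ctr k)" by (simp only: h)
        finally show ?thesis .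
      qed
      then have "norm (w - c) = norm (z - ctr k) / (1 - \<tau>)"
        using t1 by simp
      also have "\<dots> < (r/2) / (1 - \<tau>)"
        using z t1 by (intro divide_strict_right_mono) (auto simp: dist_norm norm_minus_commute)
      also have "\<dots> \<le> r"
        using t1 r by (simp add: field_simps)
      finally have "w \<in> ball c r" by (simp add: dist_norm norm_minus_commute)
      then have "w \<in> K" using B by auto
      then show "z \<in> K"
        using cK p t0 t1 zeq unfolding convex_alt by auto
    qed
    have disj: "disjoint_family_on (\<lambda>k. ball (ctr k) (r/2)) {0..N}"
      unfolding disjoint_family_on_def
    proof (intro ballI impI)
      fix k j assume "k \<in> {0..N}" "j \<in> {0..N}" "k \<noteq> j"
      have "ctr k - ctr j = (real k * r / D - real j * r / D) *\<^sub>R (p - c)"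
        unfolding ctr_def by (simp add: scaleR_diff_left)
      also have "real k * r / D - real j * r / D = (real k - real j) * r / D"
        by (simp add: left_diff_distrib diff_divide_distrib)
      finally have "ctr k - ctr j = ((real k - real j) * r / D) *\<^sub>R (p - c)" .
      then have "dist (ctr k) (ctr j) = \<bar>real k - real j\<bar> * r"
        using D r unfolding D_def by (simp add: dist_norm abs_mult)
      moreover have "1 \<le> \<bar>real k - real j\<bar>" using \<open>k \<noteq> j\<close> by linarith
      ultimately have far: "r \<le> dist (ctr k) (ctr j)" using r by simp
      show "ball (ctr k) (r/2) \<inter> ball (ctr j) (r/2) = {}"
      proof (rule ccontr)
        assume "ball (ctr k) (r/2) \<inter> ball (ctr j) (r/2) \<noteq> {}"
        then obtain z where "dist (ctr k) z < r/2" "dist (ctr j) z < r/2" by auto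
        then have "dist (ctr k) (ctr j) < r"
          using dist_triangle2[of "ctr k" "ctr j" z] by linarith
        then show False using far by simp
      qed
    qed
    have "(\<Sum>k\<in>{0..N}. emeasure lborel (ball (ctr k) (r/2))) = emeasure lborel (\<Union>k\<in>{0..N}. ball (ctr k) (r/2))"
      by (rule sum_emeasure) (use disj in auto)
    also have "\<dots> \<le> emeasure lborel K"
    proof (rule emeasure_mono)
      show "(\<Union>k\<in>{0..N}. ball (ctr k) (r/2)) \<subseteq> K"
        by (rule UN_least) (use inK in simp)
    qed (use Kb in simp)
    also have "\<dots> \<le> ennreal m" by (rule mK)
    finally have "ennreal (real (Suc N) * vol) \<le> ennreal m"
      by (simp add: em ennreal_mult' ennreal_of_nat_eq_real_of_nat)
    then have "real (Suc N) * vol \<le> m" using m by simp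
    then have "real N + 1 \<le> m / vol" using vol by (simp add: field_simps)
    then have "D / (2*r) < m / vol" using N2 by linarith
    then have "D < 2 * r * (m / vol)" using r by (simp add: field_simps)
    then show ?thesis unfolding D_def vol_def by simp
  qed
qed




lemma avg_lt: "(u::real) < v \<Longrightarrow> (u + v) / 2 < v" by simp

lemma lint_position:
  fixes g :: "real^'n \<Rightarrow> real" and A :: "real^'n^'n"
  assumes usc: "usc g" and g0: "\<And>x. 0 \<le> g x" and inv: "invertible A" and al: "0 < \<alpha>"
  shows "lint (\<lambda>x. (\<alpha> * g (A *v x + a)) powr s) = ennreal (\<alpha> powr s / \<bar>det A\<bar>) * lint (\<lambda>x. g x powr s)"
proof -
  have gm[measurable]: "g \<in> borel_measurable borel" by (rule usc_borel[OF usc])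
  have Am[measurable]: "(\<lambda>x. A *v x + a) \<in> borel \<rightarrow>\<^sub>M borel"
    by (intro borel_measurable_continuous_onI continuous_intros)
  have d: "det A \<noteq> 0" using inv by (simp add: invertible_det_nz)
  define J where "J = (\<integral>\<^sup>+x. ennreal (g (A *v x + a) powr s) \<partial>lborel)"
  have G: "(\<lambda>x. ennreal (g x powr s)) \<in> borel_measurable borel" by measurable
  have e1: "lint (\<lambda>x. g x powr s) = ennreal \<bar>det A\<bar> * J"
    unfolding lint_def J_def by (rule nn_integral_affine_matrix[OF inv G])
  have "lint (\<lambda>x. (\<alpha> * g (A *v x + a)) powr s) = (\<integral>\<^sup>+x. ennreal (\<alpha> powr s) * ennreal (g (A *v x + a) powr s) \<partial>lborel)"
    unfolding lint_def
    by (intro nn_integral_cong) (use al g0 in \<open>simp add: powr_mult ennreal_mult'\<close>)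
  also have "\<dots> = ennreal (\<alpha> powr s) * J"
    unfolding J_def by (rule nn_integral_cmult) measurable
  also have "ennreal (\<alpha> powr s) = ennreal (\<alpha> powr s / \<bar>det A\<bar>) * ennreal \<bar>det A\<bar>"
    using d by (simp add: ennreal_mult'[symmetric])
  finally show ?thesis unfolding e1 by (simp add: mult.assoc)
qed

lemma sym_inner:
  fixes A :: "real^'n^'n"
  assumes "transpose A = A"
  shows "z \<bullet> (A *v x) = x \<bullet> (A *v z)"
proof -
  have "z \<bullet> (A *v x) = (z v* A) \<bullet> x" by (simp add: dot_lmul_matrix)
  also have "z v* A = A *v z" using assms transpose_matrix_vector[of A z] by simp
  finally show ?thesis by (simp add: inner_commute)
qed

lemma psd_det_posdef:
  fixes A :: "real^'n^'n"
  assumes sym: "transpose A = A" and psd: "\<And>x. 0 \<le> x \<bullet> (A *v x)" and d: "det A \<noteq> 0"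
  shows "pos_def_mat A"
  unfolding pos_def_mat_def
proof (intro conjI sym allI impI)
  fix x :: "real^'n" assume x: "x \<noteq> 0"
  have injA: "inj ((*v) A)"
    using det_nz_iff_inj[of "(*v) A"] d by simp
  show "0 < x \<bullet> (A *v x)"
  proof (rule ccontr)
    assume "\<not> 0 < x \<bullet> (A *v x)"
    then have x0: "x \<bullet> (A *v x) = 0" using psd[of x] by simp
    define y where "y = A *v x"
    have "y \<noteq> 0"
    proof
      assume "y = 0"
      then have "A *v x = A *v 0" unfolding y_def by simp
      then show False using injA x by (meson injD)
    qed
    then have a: "0 < y \<bullet> y" by simp
    define q where "q = y \<bullet> (A *v y)"
    have q: "0 \<le> q" unfolding q_def by (rule psd)
    define t where "t = (y \<bullet> y) / (q + 1)"
    have t: "0 < t" unfolding t_def using a q by simp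
    have xy: "x \<bullet> (A *v y) = y \<bullet> y" using sym_inner[OF sym, of x y] unfolding y_def by simp
    have yx: "y \<bullet> (A *v x) = y \<bullet> y" unfolding y_def by simp
    have "(x - t *\<^sub>R y) \<bullet> (A *v (x - t *\<^sub>R y)) = x \<bullet> (A *v x) - t * (x \<bullet> (A *v y)) - t * (y \<bullet> (A *v x)) + t * t * (y \<bullet> (A *v y))"
      by (simp add: algebra_simps inner_diff_left inner_diff_right)
    also have "\<dots> = t * (t * q - 2 * (y \<bullet> y))"
      unfolding x0 xy yx q_def by (simp add: algebra_simps)
    finally have e: "(x - t *\<^sub>R y) \<bullet> (A *v (x - t *\<^sub>R y)) = t * (t * q - 2 * (y \<bullet> y))" .
    have "t * q \<le> y \<bullet> y"
    proof -
      have "t * q = (y \<bullet> y) * (q / (q + 1))" unfolding t_def by simp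
      also have "\<dots> \<le> (y \<bullet> y) * 1"
        using a q by (intro mult_left_mono) auto
      finally show ?thesis by simp
    qed
    then have "t * q - 2 * (y \<bullet> y) < 0" using a by linarith
    then have "t * (t * q - 2 * (y \<bullet> y)) < 0" using t by (simp add: mult_pos_neg)
    then show False using psd[of "x - t *\<^sub>R y"] e by simp
  qed
qed

lemma posdef_invertible:
  fixes A :: "real^'n^'n"
  assumes "pos_def_mat A"
  shows "invertible A"
proof -
  have "inj ((*v) A)"
  proof (rule injI)
    fix x y assume "A *v x = A *v y"
    then have "A *v (x - y) = 0" by (simp add: matrix_vector_mult_diff_distrib)
    then have z: "(x - y) \<bullet> (A *v (x - y)) = 0" by simp
    show "x = y"
    proof (rule ccontr)
      assume "x \<noteq> y"
      then have "x - y \<noteq> 0" by simp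
      then have "0 < (x - y) \<bullet> (A *v (x - y))" using assms unfolding pos_def_mat_def by blast
      then show False using z by simp
    qed
  qed
  then have "det A \<noteq> 0" using det_nz_iff_inj[of "(*v) A"] by simp
  then show ?thesis by (simp add: invertible_det_nz)
qed

lemma cont_param_map:
  "continuous_on UNIV (\<lambda>p :: (real^'n^'n) \<times> real \<times> (real^'n). fst p *v x + snd (snd p))"
  unfolding matrix_vector_mult_def by (intro continuous_intros)

lemma closed_feas:
  fixes g :: "real^'n \<Rightarrow> real" and x :: "real^'n"
  assumes usc: "usc g" and a0: "0 < \<alpha>0"
  shows "closed {p :: (real^'n^'n) \<times> real \<times> (real^'n). \<alpha>0 \<le> fst (snd p) \<and> F \<le> fst (snd p) * g (fst p *v x + snd (snd p))}"
  unfolding closed_sequential_limits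
proof (intro allI impI, elim conjE)
  fix P :: "nat \<Rightarrow> (real^'n^'n) \<times> real \<times> (real^'n)" and l
  assume PS: "\<forall>n. P n \<in> {p. \<alpha>0 \<le> fst (snd p) \<and> F \<le> fst (snd p) * g (fst p *v x + snd (snd p))}"
    and lim: "P \<longlonglongrightarrow> l"
  define Y where "Y = (\<lambda>p :: (real^'n^'n) \<times> real \<times> (real^'n). fst p *v x + snd (snd p))"
  have Ylim: "(\<lambda>n. Y (P n)) \<longlonglongrightarrow> Y l"
    using cont_param_map[of x] lim unfolding Y_def
    by (rule continuous_on_tendsto_compose[of UNIV]) auto
  have alim: "(\<lambda>n. fst (snd (P n))) \<longlonglongrightarrow> fst (snd l)"
    by (intro tendsto_intros lim)
  have a_ge: "\<alpha>0 \<le> fst (snd l)"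
    by (rule LIMSEQ_le_const[OF alim]) (use PS in auto)
  then have apos: "0 < fst (snd l)" using a0 by simp
  have "F \<le> fst (snd l) * g (Y l)"
  proof (rule ccontr)
    assume "\<not> ?thesis"
    then have lt: "fst (snd l) * g (Y l) < F" by simp
    define t' where "t' = (g (Y l) + F / fst (snd l)) / 2"
    have gl: "g (Y l) < F / fst (snd l)" using lt apos by (simp add: field_simps)
    have t1: "g (Y l) < t'" using gl unfolding t'_def by simp
    have t2: "fst (snd l) * t' < F"
    proof -
      have "t' < F / fst (snd l)" unfolding t'_def by (rule avg_lt[OF gl])
      then show ?thesis using apos by (simp add: field_simps)
    qed
    have ev1: "eventually (\<lambda>n. Y (P n) \<in> {y. g y < t'}) sequentially"
      by (rule topological_tendstoD[OF Ylim]) (use usc t1 in \<open>auto simp: usc_def\<close>)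
    have ev2: "eventually (\<lambda>n. fst (snd (P n)) * t' < F) sequentially"
      by (rule order_tendstoD(2)[OF _ t2]) (intro tendsto_intros alim)
    have ev: "eventually (\<lambda>n. g (Y (P n)) < t' \<and> fst (snd (P n)) * t' < F) sequentially"
      using eventually_conj[OF ev1 ev2] by simp
    then obtain N where N: "\<And>n. n \<ge> N \<Longrightarrow> g (Y (P n)) < t' \<and> fst (snd (P n)) * t' < F"
      unfolding eventually_sequentially by blast
    have PSn: "\<alpha>0 \<le> fst (snd (P N))" "F \<le> fst (snd (P N)) * g (Y (P N))"
      using PS unfolding Y_def by auto
    have pos: "fst (snd (P N)) > 0" using PSn(1) a0 by linarith
    have "fst (snd (P N)) * g (Y (P N)) < fst (snd (P N)) * t'"
      using N[of N] pos by simp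
    also have "\<dots> < F" using N[of N] by simp
    finally show False using PSn(2) by linarith
  qed
  then show "l \<in> {p. \<alpha>0 \<le> fst (snd p) \<and> F \<le> fst (snd p) * g (fst p *v x + snd (snd p))}"
    using a_ge unfolding Y_def by simp
qed

lemma closed_det_ge:
  "closed {p :: (real^'n^'n) \<times> real \<times> (real^'n). \<delta> \<le> \<bar>det (fst p)\<bar>}"
  unfolding det_def by (intro closed_Collect_le continuous_intros)

lemma closed_psd:
  "closed {A :: real^'n^'n. transpose A = A \<and> (\<forall>x. 0 \<le> x \<bullet> (A *v x))}"
  unfolding transpose_def matrix_vector_mult_def
  by (intro closed_Collect_conj closed_Collect_all closed_Collect_le closed_Collect_eq continuous_intros)




lemma alpha_bound_real:
  fixes s c1 V m :: real and d :: nat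
  assumes s: "0 < s" and c1: "0 < c1" and V: "0 < V" and m: "0 \<le> m" and d: "1 \<le> d"
  shows "\<exists>\<alpha>1. \<forall>\<alpha>>0. \<alpha> powr s * V \<le> (max 1 (ln (c1 * \<alpha>))) ^ d * m \<longrightarrow> \<alpha> \<le> \<alpha>1"
proof -
  define \<epsilon> where "\<epsilon> = s / (2 * real d)"
  have eps: "0 < \<epsilon>" unfolding \<epsilon>_def using s d by simp
  have epsd: "real d * \<epsilon> = s / 2" unfolding \<epsilon>_def using d by simp
  define C2 where "C2 = c1 powr (s/2) * m / (\<epsilon> ^ d * V)"
  define \<alpha>1 where "\<alpha>1 = max (exp 1 / c1) (C2 powr (2/s))"
  show ?thesis
  proof (intro exI[of _ \<alpha>1] allI impI)
    fix \<alpha> :: real assume a: "0 < \<alpha>" and H: "\<alpha> powr s * V \<le> (max 1 (ln (c1 * \<alpha>))) ^ d * m"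
    show "\<alpha> \<le> \<alpha>1"
    proof (cases "ln (c1 * \<alpha>) \<le> 1")
      case True
      have "c1 * \<alpha> = exp (ln (c1 * \<alpha>))" using c1 a by simp
      also have "\<dots> \<le> exp 1" using True by simp
      finally have "c1 * \<alpha> \<le> exp 1" .
      then have "\<alpha> \<le> exp 1 / c1" using c1 by (simp add: field_simps)
      then show ?thesis unfolding \<alpha>1_def by simp
    next
      case False
      let ?L = "ln (c1 * \<alpha>)"
      have ca: "0 < c1 * \<alpha>" using c1 a by simp
      have ca1: "1 \<le> c1 * \<alpha>"
      proof (rule ccontr)
        assume "\<not> 1 \<le> c1 * \<alpha>"
        then have "?L < 0" using ca by simp
        then show False using False by simp
      qed
      have mx: "max 1 ?L = ?L" using False by simp
      have Lb: "?L \<le> (c1 * \<alpha>) powr \<epsilon> / \<epsilon>" by (rule ln_powr_bound[OF ca1 eps])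
      have "?L ^ d \<le> ((c1 * \<alpha>) powr \<epsilon> / \<epsilon>) ^ d"
        by (rule power_mono[OF Lb]) (use False in simp)
      also have "\<dots> = ((c1 * \<alpha>) powr \<epsilon>) ^ d / \<epsilon> ^ d" by (simp add: power_divide)
      also have "((c1 * \<alpha>) powr \<epsilon>) ^ d = (c1 * \<alpha>) powr (s/2)"
      proof -
        have "((c1 * \<alpha>) powr \<epsilon>) ^ d = (c1 * \<alpha>) powr (real d * \<epsilon>)"
          using c1 a by (intro powr_power) simp
        then show ?thesis by (simp only: epsd)
      qed
      finally have Ld: "?L ^ d \<le> (c1 * \<alpha>) powr (s/2) / \<epsilon> ^ d" .
      have "\<alpha> powr (s/2) * \<alpha> powr (s/2) * V = \<alpha> powr s * V"
        by (simp add: powr_add[symmetric])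
      also have "\<dots> \<le> ?L ^ d * m" using H mx by simp
      also have "\<dots> \<le> (c1 * \<alpha>) powr (s/2) / \<epsilon> ^ d * m"
        by (rule mult_right_mono[OF Ld m])
      also have "\<dots> = \<alpha> powr (s/2) * (c1 powr (s/2) * m / \<epsilon> ^ d)"
        using c1 a by (simp add: powr_mult)
      finally have H2: "\<alpha> powr (s/2) * (\<alpha> powr (s/2) * V) \<le> \<alpha> powr (s/2) * (c1 powr (s/2) * m / \<epsilon> ^ d)"
        by (simp add: mult_ac)
      have pa: "0 < \<alpha> powr (s/2)" using a by simp
      have "\<alpha> powr (s/2) * V \<le> c1 powr (s/2) * m / \<epsilon> ^ d"
        using H2 mult_le_cancel_left_pos[OF pa] by blast
      then have aC: "\<alpha> powr (s/2) \<le> C2"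
        unfolding C2_def using V eps by (simp add: field_simps)
      have "\<alpha> = (\<alpha> powr (s/2)) powr (2/s)"
        using a s by (simp add: powr_powr)
      also have "\<dots> \<le> C2 powr (2/s)"
        by (rule powr_mono2) (use s aC in auto)
      finally show ?thesis unfolding \<alpha>1_def by simp
    qed
  qed
qed




lemma matrix_bounds_from_columns:
  fixes A :: "real^'n^'n"
  assumes col: "\<And>j. norm (A *v axis j 1) \<le> B"
  shows "norm A \<le> real CARD('n) * real CARD('n) * B"
    and "norm (A *v x) \<le> real CARD('n) * real CARD('n) * B * norm x"
proof -
  have comp: "\<bar>A$i$j\<bar> \<le> B" for i j
  proof -
    have "A$i$j = (A *v axis j 1)$i" by (simp add: matrix_vector_mult_basis column_def)
    then have "\<bar>A$i$j\<bar> \<le> norm (A *v axis j 1)" using component_le_norm_cart by metis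
    then show ?thesis using col[of j] by linarith
  qed
  have "norm A \<le> (\<Sum>i\<in>UNIV. norm (A$i))"
    by (simp add: norm_vec_def L2_set_le_sum)
  also have "\<dots> \<le> (\<Sum>i\<in>(UNIV::'n set). \<Sum>j\<in>(UNIV::'n set). \<bar>A$i$j\<bar>)"
    by (rule sum_mono) (rule norm_le_l1_cart)
  also have "\<dots> \<le> (\<Sum>i\<in>(UNIV::'n set). \<Sum>j\<in>(UNIV::'n set). B)"
    by (intro sum_mono comp)
  also have "\<dots> = real CARD('n) * real CARD('n) * B" by simp
  finally show "norm A \<le> real CARD('n) * real CARD('n) * B" .
  have "norm (A *v x) \<le> onorm ((*v) A) * norm x"
    by (rule onorm) simp
  also have "\<dots> \<le> real CARD('n) * real CARD('n) * B * norm x"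
    by (intro mult_right_mono onorm_le_matrix_component comp) simp
  finally show "norm (A *v x) \<le> real CARD('n) * real CARD('n) * B * norm x" .
qed

lemma finite_level_measure:
  fixes g :: "real^'n \<Rightarrow> real"
  assumes usc: "usc g" and fin: "lint g < \<infinity>" and u: "0 < u"
  shows "emeasure lborel {x. u \<le> g x} = ennreal (enn2real (emeasure lborel {x. u \<le> g x}))"
proof -
  have "ennreal u * emeasure lborel {x. u \<le> g x} \<le> lint g"
    by (rule lint_ge_level[OF usc_level_borel[OF usc]]) simp
  then have "ennreal u * emeasure lborel {x. u \<le> g x} < \<infinity>" using fin by (rule le_less_trans)
  then have "emeasure lborel {x. u \<le> g x} \<noteq> \<infinity>"
    using u by (auto simp: ennreal_mult_eq_top_iff)
  then show ?thesis by (simp add: less_top)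
qed




lemma param_bounds:
  fixes f g :: "real^'n \<Rightarrow> real" and s :: real
  assumes s: "s > 0"
    and f0: "\<forall>x. f x \<ge> 0" and g0: "\<forall>x. g x \<ge> 0"
    and pf: "proper_fun f" and pg: "proper_fun g"
    and lf: "log_concave f" and lg: "log_concave g"
    and fg: "\<forall>x. f x \<le> g x"
  shows "\<exists>\<alpha>0 \<alpha>1 \<delta> RA Ra. 0 < \<alpha>0 \<and> 0 < \<delta> \<and> (\<forall>A \<alpha> a. invertible A \<and> 0 < \<alpha> \<and> (\<forall>x. f x \<le> \<alpha> * g (A *v x + a)) \<and> \<alpha> powr s / \<bar>det A\<bar> \<le> 1
      \<longrightarrow> \<alpha>0 \<le> \<alpha> \<and> \<alpha> \<le> \<alpha>1 \<and> \<delta> \<le> \<bar>det A\<bar> \<and> norm A \<le> RA \<and> norm a \<le> Ra)"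
proof -
  have uf: "usc f" and pf': "0 < lint f" using pf unfolding proper_fun_def by auto
  have ug: "usc g" and pg': "0 < lint g" and fin: "lint g < \<infinity>" using pg unfolding proper_fun_def by auto
  have g0': "\<And>x. 0 \<le> g x" using g0 by simp
  obtain x0 r t where r: "0 < r" and t: "0 < t" and Bf: "ball x0 r \<subseteq> {x. t \<le> f x}"
    using exists_level_ball[OF uf lf pf'] by blast
  obtain M where M: "0 < M" and gM: "\<forall>y. g y \<le> M"
    using g_bounded[OF ug lg g0' pg' fin] by blast
  define \<alpha>0 where "\<alpha>0 = t / M"
  define \<delta> where "\<delta> = \<alpha>0 powr s"
  have a0: "0 < \<alpha>0" unfolding \<alpha>0_def using t M by simp
  have d0: "0 < \<delta>" unfolding \<delta>_def using a0 by simp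
  have "x0 \<in> ball x0 r" using r by simp
  then have fx0: "t \<le> f x0" using Bf by blast
  define G0 where "G0 = g x0"
  have G0: "0 < G0" unfolding G0_def using fx0 fg t by (metis less_le_trans)
  define Lset where "Lset = {x. G0 * exp (-1) \<le> g x}"
  define mL where "mL = enn2real (emeasure lborel Lset)"
  have mL: "emeasure lborel Lset = ennreal mL"
    unfolding mL_def Lset_def by (rule finite_level_measure[OF ug fin]) (use G0 in simp)
  have mL0: "0 \<le> mL" unfolding mL_def by simp
  define Vr where "Vr = unit_ball_vol (real DIM(real^'n)) * r ^ DIM(real^'n)"
  have Vr: "0 < Vr" unfolding Vr_def using r by simp
  have emB: "emeasure lborel (ball x0 r) = ennreal Vr" unfolding Vr_def using r by (simp add: emeasure_ball)
  define c1 where "c1 = G0 / t"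
  have c1: "0 < c1" unfolding c1_def using G0 t by simp
  have d1: "1 \<le> CARD('n)" by (simp add: Suc_leI)
  obtain \<alpha>1' where \<alpha>1': "\<And>\<alpha>. 0 < \<alpha> \<Longrightarrow> \<alpha> powr s * Vr \<le> (max 1 (ln (c1 * \<alpha>))) ^ CARD('n) * mL \<Longrightarrow> \<alpha> \<le> \<alpha>1'"
    using alpha_bound_real[OF s c1 Vr mL0 d1] by blast
  define \<alpha>1 where "\<alpha>1 = max 1 \<alpha>1'"
  have a11: "1 \<le> \<alpha>1" unfolding \<alpha>1_def by simp
  define K1 where "K1 = {x. t / \<alpha>1 \<le> g x}"
  have tpos: "0 < t / \<alpha>1" using t a11 by simp
  have K1c: "convex K1" unfolding K1_def by (rule lc_level_convex[OF lg tpos])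
  have K1b: "K1 \<in> sets borel" unfolding K1_def by (rule usc_level_borel[OF ug])
  define m1 where "m1 = enn2real (emeasure lborel K1)"
  have m1: "emeasure lborel K1 = ennreal m1"
    unfolding m1_def K1_def by (rule finite_level_measure[OF ug fin tpos])
  have m10: "0 \<le> m1" unfolding m1_def by simp
  have tt: "t / \<alpha>1 \<le> t" using t a11 by (simp add: divide_le_eq)
  have BK1: "ball x0 r \<subseteq> K1"
  proof
    fix x assume "x \<in> ball x0 r"
    then have "t \<le> f x" using Bf by auto
    then show "x \<in> K1" unfolding K1_def using fg tt by (metis mem_Collect_eq order_trans)
  qed
  define R1 where "R1 = 2 * r * (m1 / (unit_ball_vol (real DIM(real^'n)) * (r/2) ^ DIM(real^'n)))"
  have K1R: "norm (p - x0) \<le> R1" if "p \<in> K1" for p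
    unfolding R1_def
    by (rule convex_bounded_by_measure[OF K1c BK1 r _ m10 that K1b]) (simp add: m1)
  define B where "B = 4 * R1 / r"
  define RA where "RA = real CARD('n) * real CARD('n) * B"
  define Ra where "Ra = R1 + norm x0 + real CARD('n) * real CARD('n) * B * norm x0"
  have main: "\<forall>A \<alpha> a. invertible A \<and> 0 < \<alpha> \<and> (\<forall>x. f x \<le> \<alpha> * g (A *v x + a)) \<and> \<alpha> powr s / \<bar>det A\<bar> \<le> 1
      \<longrightarrow> \<alpha>0 \<le> \<alpha> \<and> \<alpha> \<le> \<alpha>1 \<and> \<delta> \<le> \<bar>det A\<bar> \<and> norm A \<le> RA \<and> norm a \<le> Ra"
  proof (intro allI impI)
    fix A :: "real^'n^'n" and \<alpha> :: real and a :: "real^'n"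
    assume H: "invertible A \<and> 0 < \<alpha> \<and> (\<forall>x. f x \<le> \<alpha> * g (A *v x + a)) \<and> \<alpha> powr s / \<bar>det A\<bar> \<le> 1"
    then have inv: "invertible A" and apos: "0 < \<alpha>" and feas: "\<forall>x. f x \<le> \<alpha> * g (A *v x + a)"
      and phi: "\<alpha> powr s / \<bar>det A\<bar> \<le> 1" by auto
    have dA: "0 < \<bar>det A\<bar>" using inv by (simp add: invertible_det_nz)
    have adet: "\<alpha> powr s \<le> \<bar>det A\<bar>" using phi dA by (simp add: divide_le_eq)
    have "t \<le> \<alpha> * M"
    proof -
      have "t \<le> \<alpha> * g (A *v x0 + a)" using fx0 feas by (metis order_trans)
      also have "\<dots> \<le> \<alpha> * M" using gM apos by (simp add: mult_left_mono)
      finally show ?thesis .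
    qed
    then have ge0: "\<alpha>0 \<le> \<alpha>" unfolding \<alpha>0_def using M by (simp add: divide_le_eq mult.commute)
    have "\<delta> \<le> \<alpha> powr s" unfolding \<delta>_def by (rule powr_mono2) (use s a0 ge0 in auto)
    then have c3: "\<delta> \<le> \<bar>det A\<bar>" using adet by linarith
    define u where "u = t / \<alpha>"
    have u: "0 < u" unfolding u_def using t apos by simp
    define lam where "lam = max 1 (ln (c1 * \<alpha>))"
    have lam1: "1 \<le> lam" unfolding lam_def by simp
    have Gu: "G0 / u = c1 * \<alpha>" unfolding u_def c1_def using t apos by simp
    have lnle: "ln (G0 / u) \<le> lam" unfolding Gu lam_def by simp
    have E1: "emeasure lborel {x. u \<le> g x} \<le> ennreal (lam ^ CARD('n)) * emeasure lborel Lset"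
      unfolding Lset_def G0_def
      by (rule level_measure_bound[OF ug lg g0' _ lam1 u]) (use G0 lnle in \<open>simp_all add: G0_def\<close>)
    have pre: "ball x0 r \<subseteq> {x. A *v x + a \<in> {x. u \<le> g x}}"
    proof
      fix x assume "x \<in> ball x0 r"
      then have "t \<le> f x" using Bf by auto
      then have "t \<le> \<alpha> * g (A *v x + a)" using feas by (metis order_trans)
      then have "u \<le> g (A *v x + a)" unfolding u_def using apos by (simp add: divide_le_eq mult.commute)
      then show "x \<in> {x. A *v x + a \<in> {x. u \<le> g x}}" by simp
    qed
    have "ennreal (\<bar>det A\<bar> * Vr) = ennreal \<bar>det A\<bar> * emeasure lborel (ball x0 r)"
      using emB by (simp add: ennreal_mult')
    also have "\<dots> \<le> ennreal \<bar>det A\<bar> * emeasure lborel {x. A *v x + a \<in> {x. u \<le> g x}}"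
    proof (intro mult_left_mono emeasure_mono pre)
      show "{x. A *v x + a \<in> {x. u \<le> g x}} \<in> sets lborel"
      proof -
        have T: "(\<lambda>x. A *v x + a) \<in> borel \<rightarrow>\<^sub>M borel"
          by (intro borel_measurable_continuous_onI continuous_intros)
        show ?thesis using measurable_sets[OF T usc_level_borel[OF ug, of u]] by (simp add: vimage_def)
      qed
    qed simp
    also have "\<dots> = emeasure lborel {x. u \<le> g x}"
      by (rule emeasure_affine_matrix[OF inv usc_level_borel[OF ug], symmetric])
    also have "\<dots> \<le> ennreal (lam ^ CARD('n)) * emeasure lborel Lset" by (rule E1)
    also have "\<dots> = ennreal (lam ^ CARD('n) * mL)" using mL lam1 by (simp add: ennreal_mult')
    finally have "\<bar>det A\<bar> * Vr \<le> lam ^ CARD('n) * mL"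
      using lam1 mL0 by (subst (asm) ennreal_le_iff) auto
    moreover have "\<alpha> powr s * Vr \<le> \<bar>det A\<bar> * Vr" using adet Vr by simp
    ultimately have "\<alpha> powr s * Vr \<le> (max 1 (ln (c1 * \<alpha>))) ^ CARD('n) * mL"
      unfolding lam_def by linarith
    then have "\<alpha> \<le> \<alpha>1'" by (rule \<alpha>1'[OF apos])
    then have le1: "\<alpha> \<le> \<alpha>1" unfolding \<alpha>1_def by simp
    have inK1: "A *v x + a \<in> K1" if "x \<in> ball x0 r" for x
    proof -
      have "t \<le> f x" using that Bf by auto
      then have "t \<le> \<alpha> * g (A *v x + a)" using feas by (metis order_trans)
      then have "t / \<alpha> \<le> g (A *v x + a)" using apos by (simp add: divide_le_eq mult.commute)
      moreover have "t / \<alpha>1 \<le> t / \<alpha>" using t apos le1 by (simp add: frac_le)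
      ultimately show ?thesis unfolding K1_def by simp
    qed
    have "x0 \<in> ball x0 r" using r by simp
    then have c0: "norm (A *v x0 + a - x0) \<le> R1" using inK1 K1R by blast
    have col: "norm (A *v axis j 1) \<le> B" for j
    proof -
      define v where "v = x0 + (r/2) *\<^sub>R axis j (1::real)"
      have "v \<in> ball x0 r" unfolding v_def using r by (simp add: dist_norm)
      then have cv: "norm (A *v v + a - x0) \<le> R1" using inK1 K1R by blast
      have "(A *v v + a - x0) - (A *v x0 + a - x0) = (r/2) *\<^sub>R (A *v axis j 1)"
        unfolding v_def by (simp add: matrix_vector_right_distrib matrix_vector_mult_scaleR)
      then have "(r/2) * norm (A *v axis j 1) = norm ((A *v v + a - x0) - (A *v x0 + a - x0))"
        using r by simp
      also have "\<dots> \<le> norm (A *v v + a - x0) + norm (A *v x0 + a - x0)" by (rule norm_triangle_ineq4)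
      also have "\<dots> \<le> 2 * R1" using cv c0 by simp
      finally show ?thesis unfolding B_def using r by (simp add: field_simps)
    qed
    have c4: "norm A \<le> RA" unfolding RA_def by (rule matrix_bounds_from_columns(1)[OF col])
    have Ax0: "norm (A *v x0) \<le> real CARD('n) * real CARD('n) * B * norm x0"
      by (rule matrix_bounds_from_columns(2)[OF col])
    have "norm a = norm ((A *v x0 + a - x0) + (x0 - A *v x0))" by (simp add: algebra_simps)
    also have "\<dots> \<le> norm (A *v x0 + a - x0) + norm (x0 - A *v x0)" by (rule norm_triangle_ineq)
    also have "norm (x0 - A *v x0) \<le> norm x0 + norm (A *v x0)" by (rule norm_triangle_ineq4)
    finally have "norm a \<le> norm (A *v x0 + a - x0) + (norm x0 + norm (A *v x0))" by simp
    then have "norm a \<le> Ra" unfolding Ra_def using c0 Ax0 by linarith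
    then show "\<alpha>0 \<le> \<alpha> \<and> \<alpha> \<le> \<alpha>1 \<and> \<delta> \<le> \<bar>det A\<bar> \<and> norm A \<le> RA \<and> norm a \<le> Ra"
      using ge0 le1 c3 c4 by blast
  qed
  have "0 < \<alpha>0 \<and> 0 < \<delta> \<and> (\<forall>A \<alpha> a. invertible A \<and> 0 < \<alpha> \<and> (\<forall>x. f x \<le> \<alpha> * g (A *v x + a)) \<and> \<alpha> powr s / \<bar>det A\<bar> \<le> 1
      \<longrightarrow> \<alpha>0 \<le> \<alpha> \<and> \<alpha> \<le> \<alpha>1 \<and> \<delta> \<le> \<bar>det A\<bar> \<and> norm A \<le> RA \<and> norm a \<le> Ra)"
    by (rule conjI[OF a0 conjI[OF d0 main]])
  then show ?thesis by blast
qed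





lemma cont_det_fst:
  "continuous_on S (\<lambda>p :: (real^'n^'n) \<times> real \<times> (real^'n). det (fst p))"
  unfolding det_def by (intro continuous_intros)

lemma exists_min:
  fixes f g :: "real^'n \<Rightarrow> real" and s :: real and C :: "(real^'n^'n) set"
  assumes s: "s > 0"
    and f0: "\<forall>x. f x \<ge> 0" and g0: "\<forall>x. g x \<ge> 0"
    and pf: "proper_fun f" and pg: "proper_fun g"
    and lf: "log_concave f" and lg: "log_concave g"
    and fg: "\<forall>x. f x \<le> g x"
    and C: "closed C" and C1: "mat 1 \<in> C"
  shows "\<exists>A \<alpha> a. A \<in> C \<and> invertible A \<and> 0 < \<alpha> \<and> (\<forall>x. f x \<le> \<alpha> * g (A *v x + a)) \<and>
    (\<forall>A' \<alpha>' a'. A' \<in> C \<and> invertible A' \<and> 0 < \<alpha>' \<and> (\<forall>x. f x \<le> \<alpha>' * g (A' *v x + a'))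
       \<longrightarrow> \<alpha> powr s / \<bar>det A\<bar> \<le> \<alpha>' powr s / \<bar>det A'\<bar>)"
proof -
  have ug: "usc g" using pg unfolding proper_fun_def by auto
  obtain \<alpha>0 \<alpha>1 \<delta> RA Ra where a0: "0 < \<alpha>0" and d0: "0 < \<delta>"
    and bnd: "\<And>A \<alpha> a. invertible A \<Longrightarrow> 0 < \<alpha> \<Longrightarrow> (\<forall>x. f x \<le> \<alpha> * g (A *v x + a)) \<Longrightarrow> \<alpha> powr s / \<bar>det A\<bar> \<le> 1
      \<Longrightarrow> \<alpha>0 \<le> \<alpha> \<and> \<alpha> \<le> \<alpha>1 \<and> \<delta> \<le> \<bar>det A\<bar> \<and> norm A \<le> RA \<and> norm a \<le> Ra"
    using param_bounds[OF s f0 g0 pf pg lf lg fg] by blast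
  define X where "X = cball (0::real^'n^'n) RA \<times> ({\<alpha>0..\<alpha>1} \<times> cball (0::real^'n) Ra)"
  define Fe where "Fe = (\<Inter>x. {p :: (real^'n^'n) \<times> real \<times> (real^'n). \<alpha>0 \<le> fst (snd p) \<and> f x \<le> fst (snd p) * g (fst p *v x + snd (snd p))})"
  define S where "S = X \<inter> ({p. \<delta> \<le> \<bar>det (fst p)\<bar>} \<inter> (C \<times> UNIV \<inter> Fe))"
  have cX: "compact X" unfolding X_def by (intro compact_Times compact_cball compact_Icc)
  have clFe: "closed Fe" unfolding Fe_def by (intro closed_INT ballI closed_feas[OF ug a0])
  have cS: "compact S" unfolding S_def
    by (intro compact_Int_closed cX closed_Int closed_det_ge closed_Times C closed_UNIV clFe)
  have memS: "(A, \<alpha>, a) \<in> S \<longleftrightarrow> norm A \<le> RA \<and> \<alpha>0 \<le> \<alpha> \<and> \<alpha> \<le> \<alpha>1 \<and> norm a \<le> Ra \<and> \<delta> \<le> \<bar>det A\<bar> \<and> A \<in> C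
       \<and> (\<forall>x. f x \<le> \<alpha> * g (A *v x + a))" for A \<alpha> a
    unfolding S_def X_def Fe_def by auto
  have inv1: "invertible (mat 1 :: real^'n^'n)" by (simp add: invertible_det_nz)
  have feas1: "\<forall>x. f x \<le> 1 * g (mat 1 *v x + 0)" using fg by simp
  have idS: "(mat 1, 1, 0) \<in> S"
  proof -
    have "\<alpha>0 \<le> 1 \<and> 1 \<le> \<alpha>1 \<and> \<delta> \<le> \<bar>det (mat 1 :: real^'n^'n)\<bar> \<and> norm (mat 1 :: real^'n^'n) \<le> RA \<and> norm (0::real^'n) \<le> Ra"
      by (rule bnd[OF inv1 _ feas1]) simp_all
    then show ?thesis unfolding memS using C1 feas1 by simp
  qed
  have Spos: "\<forall>p\<in>S. 0 < fst (snd p) \<and> 0 < \<bar>det (fst p)\<bar>"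
    unfolding S_def X_def using a0 d0 by auto
  have cont: "continuous_on S (\<lambda>p. fst (snd p) powr s / \<bar>det (fst p)\<bar>)"
    using Spos by (intro continuous_intros cont_det_fst) auto
  obtain p where pS: "p \<in> S" and pmin: "\<And>q. q \<in> S \<Longrightarrow> fst (snd p) powr s / \<bar>det (fst p)\<bar> \<le> fst (snd q) powr s / \<bar>det (fst q)\<bar>"
    using continuous_attains_inf[OF cS _ cont] idS by blast
  obtain A \<alpha> a where p: "p = (A, \<alpha>, a)" by (cases p) auto
  have props: "A \<in> C" "\<delta> \<le> \<bar>det A\<bar>" "\<alpha>0 \<le> \<alpha>" "\<forall>x. f x \<le> \<alpha> * g (A *v x + a)"
    using pS unfolding p memS by auto
  have invA: "invertible A" using props(2) d0 by (simp add: invertible_det_nz)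
  have apos: "0 < \<alpha>" using props(3) a0 by simp
  have phi1: "\<alpha> powr s / \<bar>det A\<bar> \<le> 1"
    using pmin[OF idS] unfolding p by simp
  show ?thesis
  proof (intro exI[of _ A] exI[of _ \<alpha>] exI[of _ a] conjI props(1) invA apos props(4) allI impI)
    fix A' \<alpha>' a' assume H: "A' \<in> C \<and> invertible A' \<and> 0 < \<alpha>' \<and> (\<forall>x. f x \<le> \<alpha>' * g (A' *v x + a'))"
    show "\<alpha> powr s / \<bar>det A\<bar> \<le> \<alpha>' powr s / \<bar>det A'\<bar>"
    proof (cases "\<alpha>' powr s / \<bar>det A'\<bar> \<le> 1")
      case True
      then have "\<alpha>0 \<le> \<alpha>' \<and> \<alpha>' \<le> \<alpha>1 \<and> \<delta> \<le> \<bar>det A'\<bar> \<and> norm A' \<le> RA \<and> norm a' \<le> Ra"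
        using H bnd by blast
      then have "(A', \<alpha>', a') \<in> S" unfolding memS using H by simp
      then show ?thesis using pmin unfolding p by fastforce
    next
      case False
      then show ?thesis using phi1 by simp
    qed
  qed
qed


theorem mainTheorem15:
  fixes f g :: "real^'n \<Rightarrow> real" and s :: real
  assumes "s > 0"
    and "\<forall>x. f x \<ge> 0" and "\<forall>x. g x \<ge> 0"
    and "proper_fun f" and "proper_fun g"
    and "log_concave f" and "log_concave g"
    and "\<forall>x. f x \<le> g x"
  shows "(\<exists>h. solves_loewner s (positions g) f h) \<and> (\<exists>h. solves_loewner s (pos_positions g) f h)"
proof -
  note A = assms
  have ug: "usc g" using assms(5) unfolding proper_fun_def by auto
  have g0: "\<And>x. 0 \<le> g x" using assms(3) by simp
  let ?I = "lint (\<lambda>x. g x powr s)"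
  have lp: "lint (\<lambda>x. (\<alpha> * g (A *v x + a)) powr s) = ennreal (\<alpha> powr s / \<bar>det A\<bar>) * ?I"
    if "invertible A" "0 < \<alpha>" for A :: "real^'n^'n" and \<alpha> a
    by (rule lint_position[OF ug g0 that])
  have P1: "\<exists>h. solves_loewner s (positions g) f h"
  proof -
    obtain A \<alpha> a where "A \<in> UNIV" and invA: "invertible A" and apos: "0 < \<alpha>"
      and feas: "\<forall>x. f x \<le> \<alpha> * g (A *v x + a)"
      and min: "\<And>A' \<alpha>' a'. A' \<in> UNIV \<and> invertible A' \<and> 0 < \<alpha>' \<and> (\<forall>x. f x \<le> \<alpha>' * g (A' *v x + a'))
        \<Longrightarrow> \<alpha> powr s / \<bar>det A\<bar> \<le> \<alpha>' powr s / \<bar>det A'\<bar>"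
      using exists_min[OF A closed_UNIV UNIV_I] by blast
    let ?h = "\<lambda>x. \<alpha> * g (A *v x + a)"
    have "solves_loewner s (positions g) f ?h"
      unfolding solves_loewner_def
    proof (intro conjI ballI impI allI)
      show "?h \<in> positions g" unfolding positions_def using invA apos by blast
      show "f x \<le> ?h x" for x using feas by simp
      fix h' assume "h' \<in> positions g" and fh': "\<forall>x. f x \<le> h' x"
      then obtain A' \<alpha>' a' where h': "h' = (\<lambda>x. \<alpha>' * g (A' *v x + a'))" and invA': "invertible A'" and apos': "0 < \<alpha>'"
        unfolding positions_def by blast
      have "\<alpha> powr s / \<bar>det A\<bar> \<le> \<alpha>' powr s / \<bar>det A'\<bar>"
        using min invA' apos' fh' h' by simp
      then have "ennreal (\<alpha> powr s / \<bar>det A\<bar>) * ?I \<le> ennreal (\<alpha>' powr s / \<bar>det A'\<bar>) * ?I"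
        by (intro mult_right_mono ennreal_leI) simp_all
      then show "lint (\<lambda>x. ?h x powr s) \<le> lint (\<lambda>x. h' x powr s)"
        unfolding h' using lp[OF invA apos] lp[OF invA' apos'] by simp
    qed
    then show ?thesis by blast
  qed
  define C where "C = {A :: real^'n^'n. transpose A = A \<and> (\<forall>x. 0 \<le> x \<bullet> (A *v x))}"
  have Ccl: "closed C" unfolding C_def by (rule closed_psd)
  have C1: "mat 1 \<in> C" unfolding C_def by simp
  have P2: "\<exists>h. solves_loewner s (pos_positions g) f h"
  proof -
    obtain A \<alpha> a where AC: "A \<in> C" and invA: "invertible A" and apos: "0 < \<alpha>"
      and feas: "\<forall>x. f x \<le> \<alpha> * g (A *v x + a)"
      and min: "\<And>A' \<alpha>' a'. A' \<in> C \<and> invertible A' \<and> 0 < \<alpha>' \<and> (\<forall>x. f x \<le> \<alpha>' * g (A' *v x + a'))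
        \<Longrightarrow> \<alpha> powr s / \<bar>det A\<bar> \<le> \<alpha>' powr s / \<bar>det A'\<bar>"
      using exists_min[OF A Ccl C1] by blast
    have pdA: "pos_def_mat A"
      using AC invA unfolding C_def by (intro psd_det_posdef) (auto simp: invertible_det_nz)
    let ?h = "\<lambda>x. \<alpha> * g (A *v x + a)"
    have "solves_loewner s (pos_positions g) f ?h"
      unfolding solves_loewner_def
    proof (intro conjI ballI impI allI)
      show "?h \<in> pos_positions g" unfolding pos_positions_def using pdA apos by blast
      show "f x \<le> ?h x" for x using feas by simp
      fix h' assume "h' \<in> pos_positions g" and fh': "\<forall>x. f x \<le> h' x"
      then obtain A' \<alpha>' a' where h': "h' = (\<lambda>x. \<alpha>' * g (A' *v x + a'))" and pd': "pos_def_mat A'" and apos': "0 < \<alpha>'"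
        unfolding pos_positions_def by blast
      have invA': "invertible A'" by (rule posdef_invertible[OF pd'])
      have A'C: "A' \<in> C"
      proof -
        have "0 \<le> x \<bullet> (A' *v x)" for x
          using pd' unfolding pos_def_mat_def by (cases "x = 0") (auto intro: less_imp_le)
        then show ?thesis using pd' unfolding C_def pos_def_mat_def by blast
      qed
      have "\<alpha> powr s / \<bar>det A\<bar> \<le> \<alpha>' powr s / \<bar>det A'\<bar>"
        using min A'C invA' apos' fh' h' by simp
      then have "ennreal (\<alpha> powr s / \<bar>det A\<bar>) * ?I \<le> ennreal (\<alpha>' powr s / \<bar>det A'\<bar>) * ?I"
        by (intro mult_right_mono ennreal_leI) simp_all
      then show "lint (\<lambda>x. ?h x powr s) \<le> lint (\<lambda>x. h' x powr s)"
        unfolding h' using lp[OF invA apos] lp[OF invA' apos'] by simp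
    qed
    then show ?thesis by blast
  qed
  show ?thesis using P1 P2 by blast
qed


end
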